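(* Let $\Gamma_0$ be a nonempty finite set of formulas over $\Sigma^\circ$ closed under subformulas, and let $\nu_0:\Gamma_0\to\{T,t,F\}$ satisfy: (1) if $\#\beta\in\Gamma_0$ for $\#\in\{\neg,\circ\}$, then $\nu_0(\#\beta)\in\tilde\#\nu_0(\beta)$; (2) if $\varphi\#\psi\in\Gamma_0$ for $\#\in\{\wedge,\vee,\to\}$, then $\nu_0(\varphi\#\psi)\in\nu_0(\varphi)\tilde\#\nu_0(\psi)$; (3) if $\alpha\wedge\neg\alpha\in\Gamma_0$ and $\nu_0(\alpha)=t$, then $\nu_0(\alpha\wedge\neg\alpha)=T$. Then there exists $\nu\in\mathcal{F}_{\bf Cila}$ with $\nu(\alpha)=\nu_0(\alpha)$ for all $\alpha\in\Gamma_0$.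
   Context: $\Sigma^\circ$ has unary $\neg,\circ$ and binary $\wedge,\vee,\to$; formulas over a denumerable set of variables. $\mathcal{A}_{\bf Cila}$ is the $\Sigma^\circ$-multialgebra with universe $\{F,t,T\}$, $D=\{t,T\}$, and: $F\tilde\vee F=\{F\}$, $F\tilde\vee T=T\tilde\vee F=T\tilde\vee T=\{T\}$, $x\tilde\vee y=D$ whenever $t\in\{x,y\}$; $x\tilde\wedge y=\{F\}$ if $F\in\{x,y\}$, $T\tilde\wedge T=\{T\}$, $t\tilde\wedge t=t\tilde\wedge T=T\tilde\wedge t=D$; $\tilde\neg F=\{T\}$, $\tilde\neg t=D$, $\tilde\neg T=\{F\}$; $F\tilde\to F=F\tilde\to T=T\tilde\to T=\{T\}$, $t\tilde\to F=T\tilde\to F=\{F\}$, $x\tilde\to t=D$ for all $x$, $t\tilde\to T=D$; $\tilde\circ F=\tilde\circ T=\{T\}$, $\tilde\circ t=\{F\}$. A valuation is a map $\nu$ from all formulas to $\{F,t,T\}$ with $\nu(\#\alpha)\in\tilde\#\nu(\alpha)$ and $\nu(\alpha\#\beta)\in\nu(\alpha)\tilde\#\nu(\beta)$. $\mathcal{F}_{\bf Cila}$ is the set of valuations with $\nu(\alpha)=t\Rightarrow\nu(\alpha\wedge\neg\alpha)=T$ for every formula $\alpha$. *)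

theory Defs
  imports Main
begin

datatype fmla = Var nat | Neg fmla | Circ fmla
  | Conj fmla fmla | Disj fmla fmla | Imp fmla fmla

datatype tv = F | t | T

definition D :: "tv set" where "D = {t, T}"

fun neg_op :: "tv \<Rightarrow> tv set" where
  "neg_op F = {T}" | "neg_op t = D" | "neg_op T = {F}"

fun circ_op :: "tv \<Rightarrow> tv set" where
  "circ_op F = {T}" | "circ_op t = {F}" | "circ_op T = {T}"

fun disj_op :: "tv \<Rightarrow> tv \<Rightarrow> tv set" where
  "disj_op F F = {F}"
| "disj_op F T = {T}"
| "disj_op T F = {T}"
| "disj_op T T = {T}"
| "disj_op _ _ = D"

fun conj_op :: "tv \<Rightarrow> tv \<Rightarrow> tv set" where
  "conj_op F _ = {F}"
| "conj_op _ F = {F}"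
| "conj_op T T = {T}"
| "conj_op _ _ = D"

fun imp_op :: "tv \<Rightarrow> tv \<Rightarrow> tv set" where
  "imp_op _ t = D"
| "imp_op F F = {T}"
| "imp_op F T = {T}"
| "imp_op T T = {T}"
| "imp_op t F = {F}"
| "imp_op T F = {F}"
| "imp_op t T = D"

fun imm_sub :: "fmla \<Rightarrow> fmla set" where
  "imm_sub (Var n) = {}"
| "imm_sub (Neg a) = {a}"
| "imm_sub (Circ a) = {a}"
| "imm_sub (Conj a b) = {a, b}"
| "imm_sub (Disj a b) = {a, b}"
| "imm_sub (Imp a b) = {a, b}"

definition closed_sub :: "fmla set \<Rightarrow> bool" where
  "closed_sub G \<longleftrightarrow> (\<forall>a\<in>G. imm_sub a \<subseteq> G)"

definition valuation :: "(fmla \<Rightarrow> tv) \<Rightarrow> bool" where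
  "valuation v \<longleftrightarrow>
     (\<forall>a. v (Neg a) \<in> neg_op (v a)) \<and>
     (\<forall>a. v (Circ a) \<in> circ_op (v a)) \<and>
     (\<forall>a b. v (Conj a b) \<in> conj_op (v a) (v b)) \<and>
     (\<forall>a b. v (Disj a b) \<in> disj_op (v a) (v b)) \<and>
     (\<forall>a b. v (Imp a b) \<in> imp_op (v a) (v b))"

definition F_Cila :: "(fmla \<Rightarrow> tv) set" where
  "F_Cila = {v. valuation v \<and> (\<forall>a. v a = t \<longrightarrow> v (Conj a (Neg a)) = T)}"

end

theory Submission
  imports Defs
begin

definition pick :: "tv set \<Rightarrow> tv" where
  "pick S = (if T \<in> S then T else if F \<in> S then F else t)"

lemma pick_in: "S \<noteq> {} \<Longrightarrow> pick S \<in> S"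
  unfolding pick_def by (metis all_not_in_conv tv.exhaust)

lemma ne_neg: "neg_op x \<noteq> {}" by (cases x) (auto simp: D_def)
lemma ne_circ: "circ_op x \<noteq> {}" by (cases x) auto
lemma ne_conj: "conj_op x y \<noteq> {}" by (cases x; cases y) (auto simp: D_def)
lemma ne_disj: "disj_op x y \<noteq> {}" by (cases x; cases y) (auto simp: D_def)
lemma ne_imp: "imp_op x y \<noteq> {}" by (cases x; cases y) (auto simp: D_def)

primrec ext :: "fmla set \<Rightarrow> (fmla \<Rightarrow> tv) \<Rightarrow> fmla \<Rightarrow> tv" where
  "ext G v (Var n) = (if Var n \<in> G then v (Var n) else F)"
| "ext G v (Neg a) = (if Neg a \<in> G then v (Neg a) else pick (neg_op (ext G v a)))"
| "ext G v (Circ a) = (if Circ a \<in> G then v (Circ a) else pick (circ_op (ext G v a)))"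
| "ext G v (Conj a b) = (if Conj a b \<in> G then v (Conj a b) else pick (conj_op (ext G v a) (ext G v b)))"
| "ext G v (Disj a b) = (if Disj a b \<in> G then v (Disj a b) else pick (disj_op (ext G v a) (ext G v b)))"
| "ext G v (Imp a b) = (if Imp a b \<in> G then v (Imp a b) else pick (imp_op (ext G v a) (ext G v b)))"

lemma ext_G: "a \<in> G \<Longrightarrow> ext G v a = v a"
  by (cases a) auto

theorem mainTheorem8:
  fixes G0 :: "fmla set" and v0 :: "fmla \<Rightarrow> tv"
  assumes "G0 \<noteq> {}" and "finite G0" and "closed_sub G0"
    and "\<And>b. Neg b \<in> G0 \<Longrightarrow> v0 (Neg b) \<in> neg_op (v0 b)"
    and "\<And>b. Circ b \<in> G0 \<Longrightarrow> v0 (Circ b) \<in> circ_op (v0 b)"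
    and "\<And>a b. Conj a b \<in> G0 \<Longrightarrow> v0 (Conj a b) \<in> conj_op (v0 a) (v0 b)"
    and "\<And>a b. Disj a b \<in> G0 \<Longrightarrow> v0 (Disj a b) \<in> disj_op (v0 a) (v0 b)"
    and "\<And>a b. Imp a b \<in> G0 \<Longrightarrow> v0 (Imp a b) \<in> imp_op (v0 a) (v0 b)"
    and "\<And>a. Conj a (Neg a) \<in> G0 \<Longrightarrow> v0 a = t \<Longrightarrow> v0 (Conj a (Neg a)) = T"
  shows "\<exists>v\<in>F_Cila. \<forall>a\<in>G0. v a = v0 a"
proof
  let ?v = "ext G0 v0"
  have cl: "\<And>x a. x \<in> G0 \<Longrightarrow> a \<in> imm_sub x \<Longrightarrow> a \<in> G0"
    using assms(3) unfolding closed_sub_def by blast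
  have val: "valuation ?v"
    unfolding valuation_def
  proof (intro conjI allI)
    fix a show "?v (Neg a) \<in> neg_op (?v a)"
    proof (cases "Neg a \<in> G0")
      case True then have "a \<in> G0" using cl[of "Neg a" a] by simp
      then show ?thesis using True assms(4) by (simp add: ext_G)
    qed (simp add: pick_in ne_neg)
  next
    fix a show "?v (Circ a) \<in> circ_op (?v a)"
    proof (cases "Circ a \<in> G0")
      case True then have "a \<in> G0" using cl[of "Circ a" a] by simp
      then show ?thesis using True assms(5) by (simp add: ext_G)
    qed (simp add: pick_in ne_circ)
  next
    fix a b show "?v (Conj a b) \<in> conj_op (?v a) (?v b)"
    proof (cases "Conj a b \<in> G0")
      case True then have "a \<in> G0" "b \<in> G0" using cl[of "Conj a b"] by auto
      then show ?thesis using True assms(6) by (simp add: ext_G)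
    qed (simp add: pick_in ne_conj)
  next
    fix a b show "?v (Disj a b) \<in> disj_op (?v a) (?v b)"
    proof (cases "Disj a b \<in> G0")
      case True then have "a \<in> G0" "b \<in> G0" using cl[of "Disj a b"] by auto
      then show ?thesis using True assms(7) by (simp add: ext_G)
    qed (simp add: pick_in ne_disj)
  next
    fix a b show "?v (Imp a b) \<in> imp_op (?v a) (?v b)"
    proof (cases "Imp a b \<in> G0")
      case True then have "a \<in> G0" "b \<in> G0" using cl[of "Imp a b"] by auto
      then show ?thesis using True assms(8) by (simp add: ext_G)
    qed (simp add: pick_in ne_imp)
  qed
  have cila: "\<forall>a. ?v a = t \<longrightarrow> ?v (Conj a (Neg a)) = T"
  proof (intro allI impI)
    fix a assume at: "?v a = t"
    show "?v (Conj a (Neg a)) = T"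
    proof (cases "Conj a (Neg a) \<in> G0")
      case True then have "a \<in> G0" using cl[of "Conj a (Neg a)" a] by simp
      then show ?thesis using True assms(9) at by (simp add: ext_G)
    next
      case False
      have "?v (Neg a) \<in> neg_op (?v a)" using val unfolding valuation_def by blast
      then have "?v (Neg a) \<in> D" using at by simp
      then have "T \<in> conj_op (?v a) (?v (Neg a))" using at by (auto simp: D_def)
      then show ?thesis using False by (simp add: pick_def)
    qed
  qed
  show "?v \<in> F_Cila" using val cila unfolding F_Cila_def by blast
  show "\<forall>a\<in>G0. ?v a = v0 a" by (simp add: ext_G)
qed

end
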